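(* Let $\phi\in\mathcal{BF}$ and set $\beta:=-\omega_0^{\phi'}$. Assume that the L\'evy measure of $\phi$ has a density $\mu:(0,\infty)\to(0,\infty)$ such that $t\mapsto e^{\beta t}\mu(t)$ is non-increasing, and let $\phi_e$ be the extension of $\phi$ to $(-\beta,\infty)$. (i) There is a constant $c_1>0$ such that $\mu(t)\le -c_1 t^{-3}\phi_e''(t^{-1}-\beta)e^{-\beta t}$ for all $t>0$. (ii) If there exist constants $\theta>0$, $0\le\Lambda_1<\Lambda_2\le\infty$ and $\gamma>0$ such that \[ \frac{\phi_e''(\lambda x-\beta)}{\phi_e''(\lambda-\beta)}\le\theta x^{-\gamma}\quad\text{for all } x\ge1,\ \lambda\in(\Lambda_1,\Lambda_2), \] then there exist constants $c_2>0$ and $\delta\in(0,1)$ such that $\mu(t)\ge -c_2 t^{-3}\phi_e''(t^{-1}-\beta)e^{-\beta t}$ for all $t\in(\delta\Lambda_2^{-1},\delta\Lambda_1^{-1})$ (conventions $1/0=\infty$, $1/\infty=0$).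
   Context: A function $\phi:(0,\infty)\to[0,\infty)$ is a Bernstein function, $\phi\in\mathcal{BF}$, if it is $C^\infty$ and $(-1)^{n-1}\phi^{(n)}(\lambda)\ge0$ for all $n\in\mathbb{N}$, $\lambda>0$. Every $\phi\in\mathcal{BF}$ has a unique representation $\phi(\lambda)=a+b\lambda+\int_{(0,\infty)}(1-e^{-\lambda t})\mu(dt)$ with $a,b\ge0$ and a measure $\mu$ on $(0,\infty)$ with $\int(1\wedge t)\mu(dt)<\infty$, called the L\'evy measure of $\phi$. Then $\phi'$ is completely monotone ($C^\infty$ with $(-1)^n(\phi')^{(n)}\ge0$). For a completely monotone $f$ with $f^{(n)}(0+):=\lim_{\lambda\to0+}f^{(n)}(\lambda)\in[-\infty,\infty]$: if all $f^{(n)}(0+)$ are finite, $\omega_0^f:=\inf\{\lambda\in\mathbb{R}:\sum_{n\ge0}\frac{f^{(n)}(0+)}{n!}\lambda^n\text{ converges}\}$, otherwise $\omega_0^f:=0$. With $\beta:=-\omega_0^{\phi'}\in[0,\infty]$, the extension $\phi_e:(-\beta,\infty)\to\mathbb{R}$ is $\phi_e=\phi$ on $(0,\infty)$ and, if $\beta>0$, $\phi_e(\lambda)=\sum_{n\ge0}\frac{\phi^{(n)}(0+)}{n!}\lambda^n$ for $\lambda\in(-\beta,0]$ (all $\phi^{(n)}(0+):=\lim_{\lambda\to0+}\phi^{(n)}(\lambda)$ are then finite); $\phi_e$ is $C^\infty$ on $(-\beta,\infty)$. *)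

theory Defs
  imports "HOL-Analysis.Analysis"
begin

definition bernstein_function :: "(real \<Rightarrow> real) \<Rightarrow> bool" where
  "bernstein_function \<phi> \<longleftrightarrow>
     (\<forall>x>0. \<phi> x \<ge> 0) \<and>
     (\<forall>n. \<forall>x>0. ((deriv ^^ n) \<phi> has_real_derivative (deriv ^^ Suc n) \<phi> x) (at x)) \<and>
     (\<forall>n\<ge>1. \<forall>x>0. (-1) ^ (n - 1) * (deriv ^^ n) \<phi> x \<ge> 0)"

text \<open>The Levy measure of phi has density mu on (0,\<infinity>): Levy-Khintchine
  representation phi(l) = a + b l + int_(0,\<infinity>) (1 - e^(-l t)) mu(t) dt
  with a, b \<ge> 0, mu \<ge> 0 and int (1 \<and> t) mu(t) dt < \<infinity>.\<close>
definition levy_density :: "(real \<Rightarrow> real) \<Rightarrow> (real \<Rightarrow> real) \<Rightarrow> bool" where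
  "levy_density \<phi> \<mu> \<longleftrightarrow>
     (\<forall>t>0. \<mu> t \<ge> 0) \<and>
     set_integrable lborel {0<..} (\<lambda>t. min 1 t * \<mu> t) \<and>
     (\<exists>a b. a \<ge> 0 \<and> b \<ge> 0 \<and>
        (\<forall>l>0. \<phi> l = a + b * l + (LINT t:{0<..}|lborel. (1 - exp (- l * t)) * \<mu> t)))"

definition deriv_at_0 :: "(real \<Rightarrow> real) \<Rightarrow> nat \<Rightarrow> real" where
  "deriv_at_0 f n = Lim (at_right 0) ((deriv ^^ n) f)"

definition all_derivs_finite_at_0 :: "(real \<Rightarrow> real) \<Rightarrow> bool" where
  "all_derivs_finite_at_0 f \<longleftrightarrow> (\<forall>n. \<exists>L. ((deriv ^^ n) f \<longlongrightarrow> L) (at_right 0))"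

definition omega0 :: "(real \<Rightarrow> real) \<Rightarrow> ereal" where
  "omega0 f = (if all_derivs_finite_at_0 f
      then Inf (ereal ` {l. summable (\<lambda>n. deriv_at_0 f n / fact n * l ^ n)})
      else 0)"

text \<open>The extension phi_e of phi to (-beta,\<infinity>) (beta real); values for
  arguments \<le> -beta are irrelevant.\<close>
definition phi_ext :: "(real \<Rightarrow> real) \<Rightarrow> real \<Rightarrow> real \<Rightarrow> real" where
  "phi_ext \<phi> \<beta> l = (if l > 0 \<or> \<beta> \<le> 0 then \<phi> l
      else (\<Sum>n. deriv_at_0 \<phi> n / fact n * l ^ n))"

end

theory Submission
  imports Defs "HOL-Probability.Distributions"
begin
lemma deriv_under_integral:
  fixes f g :: "real \<Rightarrow> real \<Rightarrow> real" and w :: "real \<Rightarrow> real"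
  assumes eta: "\<eta> > 0"
  and int: "\<And>l. l \<in> ball l0 \<eta> \<Longrightarrow> integrable lborel (f l)"
  and gm: "g l0 \<in> borel_measurable lborel"
  and wi: "integrable lborel w"
  and der: "\<And>l t. l \<in> ball l0 \<eta> \<Longrightarrow> ((\<lambda>l. f l t) has_real_derivative g l t) (at l)"
  and bd: "\<And>l t. l \<in> ball l0 \<eta> \<Longrightarrow> \<bar>g l t\<bar> \<le> w t"
  shows "((\<lambda>l. integral\<^sup>L lborel (f l)) has_real_derivative integral\<^sup>L lborel (g l0)) (at l0)"
proof -
  have l0: "l0 \<in> ball l0 \<eta>" using eta by simp
  have bound: "\<bar>(f (l0 + h) t - f l0 t) / h\<bar> \<le> w t" if h: "h \<in> ball 0 \<eta>" "h \<noteq> 0" for h t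
  proof -
    have "norm (f (l0+h) t - f l0 t) \<le> w t * norm ((l0+h) - l0)"
    proof (rule field_differentiable_bound[of "ball l0 \<eta>" "\<lambda>l. f l t" "\<lambda>l. g l t"])
      show "\<And>z. z \<in> ball l0 \<eta> \<Longrightarrow> ((\<lambda>l. f l t) has_field_derivative g z t) (at z within ball l0 \<eta>)"
        using der has_field_derivative_at_within by blast
      show "\<And>z. z \<in> ball l0 \<eta> \<Longrightarrow> norm (g z t) \<le> w t" using bd by simp
      show "l0 + h \<in> ball l0 \<eta>" using h by (simp add: dist_norm)
    qed (use l0 in auto)
    then show ?thesis using h by (simp add: divide_le_eq abs_divide)
  qed
  have "((\<lambda>h. (integral\<^sup>L lborel (f (l0 + h)) - integral\<^sup>L lborel (f l0)) / h) \<longlongrightarrow> integral\<^sup>L lborel (g l0)) (at 0 within ball 0 \<eta>)"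
  proof (subst tendsto_at_iff_sequentially, intro allI impI)
    fix X :: "nat \<Rightarrow> real" assume X: "\<forall>i. X i \<in> ball 0 \<eta> - {0}" and X0: "X \<longlonglongrightarrow> 0"
    have Xb: "l0 + X i \<in> ball l0 \<eta>" for i using X by (auto simp: dist_norm)
    have eq: "(integral\<^sup>L lborel (f (l0 + X i)) - integral\<^sup>L lborel (f l0)) / X i
        = integral\<^sup>L lborel (\<lambda>t. (f (l0 + X i) t - f l0 t) / X i)" for i
      using int[OF Xb[of i]] int[OF l0] by simp
    have "(\<lambda>i. integral\<^sup>L lborel (\<lambda>t. (f (l0 + X i) t - f l0 t) / X i)) \<longlonglongrightarrow> integral\<^sup>L lborel (g l0)"
    proof (rule integral_dominated_convergence[where w=w])
      show "g l0 \<in> borel_measurable lborel" by fact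
      show "(\<lambda>t. (f (l0 + X i) t - f l0 t) / X i) \<in> borel_measurable lborel" for i
        using int[OF Xb[of i]] int[OF l0] by auto
      show "integrable lborel w" by fact
      show "AE t in lborel. (\<lambda>i. (f (l0 + X i) t - f l0 t) / X i) \<longlonglongrightarrow> g l0 t"
      proof (rule AE_I2)
        fix t
        have "((\<lambda>h. (f (l0 + h) t - f l0 t) / h) \<longlongrightarrow> g l0 t) (at 0)"
          using der[OF l0, of t] unfolding DERIV_def .
        then show "(\<lambda>i. (f (l0 + X i) t - f l0 t) / X i) \<longlonglongrightarrow> g l0 t"
          unfolding tendsto_at_iff_sequentially[where s=UNIV] using X X0 by (auto simp: comp_def)
      qed
      show "AE t in lborel. norm ((f (l0 + X i) t - f l0 t) / X i) \<le> w t" for i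
        using bound X by auto
    qed
    then show "((\<lambda>h. (integral\<^sup>L lborel (f (l0 + h)) - integral\<^sup>L lborel (f l0)) / h) \<circ> X) \<longlonglongrightarrow> integral\<^sup>L lborel (g l0)"
      by (simp add: comp_def eq)
  qed
  then have "((\<lambda>h. (integral\<^sup>L lborel (f (l0 + h)) - integral\<^sup>L lborel (f l0)) / h) \<longlongrightarrow> integral\<^sup>L lborel (g l0)) (at 0)"
    using at_within_open[of 0 "ball 0 \<eta>"] eta by (metis centre_in_ball open_ball)
  then show ?thesis unfolding DERIV_def .
qed


lemma pow_le_exp: "0 \<le> (x::real) \<Longrightarrow> x^n / fact n \<le> exp x"
proof -
  assume x: "0 \<le> x"
  have "x^n/fact n \<le> (\<Sum>i\<le>n. x^i/fact i)"
    by (rule member_le_sum) (use x in auto)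
  also have "\<dots> \<le> exp x"
    using x summable_exp_generic[of x]
    by (auto simp: exp_def divide_inverse ac_simps intro!: sum_le_suminf)
  finally show ?thesis .
qed

lemma pow_le_exp': assumes "0 \<le> (t::real)" "0 < c" shows "t^n \<le> fact n / c^n * exp (c*t)"
proof -
  have "(c*t)^n / fact n \<le> exp (c*t)" using assms by (intro pow_le_exp) auto
  then show ?thesis using assms by (simp add: field_simps power_mult_distrib)
qed

locale LD =
  fixes \<mu> :: "real \<Rightarrow> real"
  assumes mu_pos: "\<And>t. 0 < t \<Longrightarrow> 0 < \<mu> t"
  and mint: "set_integrable lborel {0<..} (\<lambda>t. min 1 t * \<mu> t)"
begin

definition m where "m t = indicator {0<..} t * \<mu> t"

lemma m_nonneg: "0 \<le> m t"
  using mu_pos[of t] by (auto simp: m_def indicator_def)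

lemma m_zero: "t \<le> 0 \<Longrightarrow> m t = 0"
  by (auto simp: m_def)

lemma mint': "integrable lborel (\<lambda>t. m t * min 1 t)"
proof -
  have "(\<lambda>t. indicator {0<..} t *\<^sub>R (min 1 t * \<mu> t)) = (\<lambda>t. m t * min 1 t)"
    by (auto simp: m_def fun_eq_iff)
  then show ?thesis using mint unfolding set_integrable_def by simp
qed

lemma m_meas[measurable]: "m \<in> borel_measurable lborel"
proof -
  have "(\<lambda>t. m t * min 1 t) \<in> borel_measurable lborel" using mint' by auto
  then have "(\<lambda>t. (m t * min 1 t) / min 1 t) \<in> borel_measurable lborel" by measurable
  moreover have "(\<lambda>t. (m t * min 1 t) / min 1 t) = m"
    by (auto simp: fun_eq_iff m_def indicator_def)
  ultimately show ?thesis by simp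
qed

definition K where "K k l = integral\<^sup>L lborel (\<lambda>t. m t * (t^k * exp (-l*t)))"
definition G where "G l = integral\<^sup>L lborel (\<lambda>t. m t * (1 - exp (-l*t)))"
definition H where "H \<rho> \<longleftrightarrow> (\<forall>r<\<rho>. integrable lborel (\<lambda>t. m t * (t * exp (r*t))))"

lemma bound_int:
  assumes "integrable lborel (\<lambda>t. m t * h t)" "f \<in> borel_measurable lborel"
    "\<And>t. 0 < t \<Longrightarrow> \<bar>f t\<bar> \<le> C * h t"
  shows "integrable lborel (\<lambda>t. m t * f t)"
proof (rule Bochner_Integration.integrable_bound)
  show "integrable lborel (\<lambda>t. C * (m t * h t))" using assms(1) by simp
  show "(\<lambda>t. m t * f t) \<in> borel_measurable lborel" using assms(2) by measurable
  show "AE t in lborel. norm (m t * f t) \<le> norm (C * (m t * h t))"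
  proof (rule AE_I2)
    fix t show "norm (m t * f t) \<le> norm (C * (m t * h t))"
    proof (cases "t > 0")
      case True
      have "norm (m t * f t) = m t * \<bar>f t\<bar>" using m_nonneg[of t] by (simp add: abs_mult)
      also have "\<dots> \<le> m t * (C * h t)" using assms(3)[OF True] m_nonneg[of t] by (simp add: mult_left_mono)
      also have "\<dots> \<le> norm (C * (m t * h t))" by (metis abs_ge_self mult.left_commute real_norm_def)
      finally show ?thesis .
    qed (simp add: m_zero)
  qed
qed

lemma H0: "H 0"
  unfolding H_def
proof (intro allI impI)
  fix r :: real assume r: "r < 0"
  show "integrable lborel (\<lambda>t. m t * (t * exp (r*t)))"
  proof (rule bound_int[OF mint', where C="max 1 (1/(-r))"])
    fix t :: real assume t: "0 < t"
    show "\<bar>t * exp (r*t)\<bar> \<le> max 1 (1/(-r)) * min 1 t"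
    proof (cases "t \<le> 1")
      case True
      have "r*t \<le> 0" using r t by (simp add: mult_nonpos_nonneg)
      then have a: "t * exp (r*t) \<le> t * 1" using t by (intro mult_left_mono) auto
      have b: "1 * t \<le> max 1 (1/(-r)) * t" by (rule mult_right_mono) (use t in auto)
      have c: "min 1 t = t" using True by simp
      have d: "\<bar>t * exp (r*t)\<bar> = t * exp (r*t)" using t by simp
      show ?thesis unfolding c d using a b by linarith
    next
      case False
      have "t \<le> fact 1 / (-r)^1 * exp ((-r)*t)" using pow_le_exp'[of t "-r" 1] t r by simp
      then have "t * exp (r*t) \<le> (fact 1 / (-r)^1 * exp ((-r)*t)) * exp(r*t)"
        by (rule mult_right_mono) auto
      also have "\<dots> = 1/(-r)" by (simp add: exp_add[symmetric])
      finally have "t * exp (r*t) \<le> 1/(-r)" .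
      then show ?thesis using False t by (auto simp: min_def max_def)
    qed
  qed measurable
qed

lemma intk:
  assumes H: "H \<rho>" and k: "1 \<le> k" and l: "-\<rho> < l"
  shows "integrable lborel (\<lambda>t. m t * (t^k * exp (-l*t)))"
proof -
  define r where "r = (\<rho> - l)/2"
  define c where "c = (l + \<rho>)/2"
  have r: "r < \<rho>" and c: "c > 0" using l by (auto simp: r_def c_def)
  have cr: "-l = r - c" by (simp add: r_def c_def field_simps)
  show ?thesis
  proof (rule bound_int[where h="\<lambda>t. t * exp (r*t)" and C="fact (k-1) / c^(k-1)"])
    show "integrable lborel (\<lambda>t. m t * (t * exp (r * t)))" using H r by (auto simp: H_def)
    fix t :: real assume t: "0 < t"
    have tk: "t^k = t * t^(k-1)" using k by (metis One_nat_def Suc_le_D diff_Suc_1 power_Suc)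
    have "t^(k-1) \<le> fact (k-1) / c^(k-1) * exp (c*t)" using pow_le_exp'[of t c "k-1"] t c by simp
    then have "t * t^(k-1) * exp(-c*t) \<le> t * (fact (k-1) / c^(k-1) * exp (c*t)) * exp(-c*t)"
      using t by (intro mult_right_mono mult_left_mono) auto
    also have "\<dots> = fact (k-1) / c^(k-1) * t" by (simp add: exp_minus field_simps)
    finally have "t * t^(k-1) * exp(-c*t) \<le> fact (k-1) / c^(k-1) * t" .
    then have "t * t^(k-1) * exp(-c*t) * exp (r*t) \<le> fact (k-1) / c^(k-1) * t * exp (r*t)"
      by (intro mult_right_mono) auto
    moreover have "exp (-l*t) = exp(-c*t) * exp (r*t)" unfolding cr by (simp add: exp_add[symmetric] algebra_simps)
    ultimately show "\<bar>t^k * exp (-l*t)\<bar> \<le> fact (k-1) / c^(k-1) * (t * exp (r*t))"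
      using t by (simp add: tk mult_ac)
  qed measurable
qed

lemma intG:
  assumes H: "H \<rho>" and l: "-\<rho> < l"
  shows "integrable lborel (\<lambda>t. m t * (1 - exp (-l*t)))"
proof (cases "l \<ge> 0")
  case True
  show ?thesis
  proof (rule bound_int[OF mint', where C="max 1 l"])
    fix t :: real assume t: "0 < t"
    have e1: "1 - exp (-l*t) \<le> 1" by simp
    have e2: "1 - exp (-l*t) \<le> l*t" using exp_ge_add_one_self[of "-l*t"] by simp
    have e0: "0 \<le> 1 - exp (-l*t)" using True t by (simp add: mult_nonneg_nonneg)
    show "\<bar>1 - exp (-l*t)\<bar> \<le> max 1 l * min 1 t"
    proof (cases "t \<le> 1")
      case True
      have "l * t \<le> max 1 l * t" using t by (intro mult_right_mono) auto
      then show ?thesis using e0 e2 True by (simp add: min_def)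
    next
      case False
      have a: "1 \<le> max 1 l" by simp
      have c: "min 1 t = 1" using False by simp
      have d: "\<bar>1 - exp (-l*t)\<bar> = 1 - exp (-l*t)" using e0 by simp
      show ?thesis unfolding c d using a e1 by linarith
    qed
  qed measurable
next
  case False
  show ?thesis
  proof (rule bound_int[where h="\<lambda>t. t * exp ((-l)*t)" and C="-l"])
    have "-l < \<rho>" using l by simp
    then show "integrable lborel (\<lambda>t. m t * (t * exp ((-l) * t)))" by (rule H[unfolded H_def, rule_format])
    fix t :: real assume t: "0 < t"
    have ex: "exp x - 1 \<le> x * exp x" for x :: real
    proof -
      have a: "1 - x \<le> exp(-x)" using exp_ge_add_one_self[of "-x"] by simp
      have "exp x * (1 - x) \<le> exp x * exp(-x)" by (rule mult_left_mono[OF a]) simp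
      then show ?thesis by (simp add: exp_minus algebra_simps)
    qed
    have "exp (-l*t) - 1 \<le> (-l*t) * exp (-l*t)" using ex[of "-l*t"] by simp
    moreover have "1 \<le> exp (-l*t)" using False t by (simp add: mult_nonpos_nonneg)
    ultimately show "\<bar>1 - exp (-l*t)\<bar> \<le> -l * (t * exp ((-l)*t))" by simp
  qed measurable
qed

end
context LD begin

lemma ball_gt: assumes "-\<rho> < l" "l' \<in> ball l ((l+\<rho>)/2)" shows "-\<rho> < l'" "l - (l+\<rho>)/2 < l'"
proof -
  have "\<bar>l - l'\<bar> < (l+\<rho>)/2" using assms(2) by (simp add: dist_real_def)
  moreover have "l - l' \<le> \<bar>l - l'\<bar>" by simp
  moreover have "(l+\<rho>)/2 = l/2 + \<rho>/2" by simp
  ultimately show "-\<rho> < l'" "l - (l+\<rho>)/2 < l'" using assms(1) by linarith+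
qed

lemma ball_gt2: "-\<rho> < (l::real) \<Longrightarrow> -\<rho> < l - (l+\<rho>)/2" by (simp add: field_simps)

lemma K_deriv:
  assumes H: "H \<rho>" and k: "1 \<le> k" and l: "-\<rho> < l"
  shows "(K k has_real_derivative - K (Suc k) l) (at l)"
proof -
  define \<eta> where "\<eta> = (l+\<rho>)/2"
  have eta: "\<eta> > 0" using l by (simp add: \<eta>_def)
  have "((\<lambda>l. integral\<^sup>L lborel (\<lambda>t. m t * (t^k * exp (-l*t)))) has_real_derivative
      integral\<^sup>L lborel (\<lambda>t. - (m t * (t^(Suc k) * exp (-l*t))))) (at l)"
  proof (rule deriv_under_integral[OF eta, where w="\<lambda>t. m t * (t^(Suc k) * exp (-(l-\<eta>)*t))"])
    show "integrable lborel (\<lambda>t. m t * (t^k * exp (-l'*t)))" if "l' \<in> ball l \<eta>" for l'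
      using intk[OF H k] ball_gt[OF l] that by (simp add: \<eta>_def)
    show "(\<lambda>t. - (m t * (t^(Suc k) * exp (-l*t)))) \<in> borel_measurable lborel" by measurable
    show "integrable lborel (\<lambda>t. m t * (t^(Suc k) * exp (-(l-\<eta>)*t)))"
      using intk[OF H _ ball_gt2[OF l], of "Suc k"] by (simp add: \<eta>_def)
    show "((\<lambda>l. m t * (t^k * exp (-l*t))) has_real_derivative - (m t * (t^(Suc k) * exp (-l'*t)))) (at l')" for l' t
      by (auto intro!: derivative_eq_intros simp: algebra_simps)
    show "\<bar>- (m t * (t^(Suc k) * exp (-l'*t)))\<bar> \<le> m t * (t^(Suc k) * exp (-(l-\<eta>)*t))"
      if "l' \<in> ball l \<eta>" for l' t
    proof (cases "t > 0")
      case True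
      have "l - \<eta> < l'" using ball_gt[OF l] that by (simp add: \<eta>_def)
      then have "(l-\<eta>)*t \<le> l'*t" using True by (intro mult_right_mono) auto
      then have "exp (-l'*t) \<le> exp (-(l-\<eta>)*t)" by (simp add: algebra_simps)
      then have "m t * (t^(Suc k) * exp (-l'*t)) \<le> m t * (t^(Suc k) * exp (-(l-\<eta>)*t))"
        using True m_nonneg[of t] by (intro mult_left_mono) auto
      moreover have "0 \<le> m t * (t^(Suc k) * exp (-l'*t))" using True m_nonneg[of t] by simp
      ultimately show ?thesis by simp
    qed (simp add: m_zero)
  qed
  then show ?thesis unfolding K_def[abs_def] by simp
qed

lemma G_deriv:
  assumes H: "H \<rho>" and l: "-\<rho> < l"
  shows "(G has_real_derivative K 1 l) (at l)"
proof -
  define \<eta> where "\<eta> = (l+\<rho>)/2"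
  have eta: "\<eta> > 0" using l by (simp add: \<eta>_def)
  have "((\<lambda>l. integral\<^sup>L lborel (\<lambda>t. m t * (1 - exp (-l*t)))) has_real_derivative
      integral\<^sup>L lborel (\<lambda>t. m t * (t^1 * exp (-l*t)))) (at l)"
  proof (rule deriv_under_integral[OF eta, where w="\<lambda>t. m t * (t^1 * exp (-(l-\<eta>)*t))"])
    show "integrable lborel (\<lambda>t. m t * (1 - exp (-l'*t)))" if "l' \<in> ball l \<eta>" for l'
      using intG[OF H] ball_gt[OF l] that by (simp add: \<eta>_def)
    show "(\<lambda>t. m t * (t^1 * exp (-l*t))) \<in> borel_measurable lborel" by measurable
    show "integrable lborel (\<lambda>t. m t * (t^1 * exp (-(l-\<eta>)*t)))"
      using intk[OF H _ ball_gt2[OF l], of 1] by (simp add: \<eta>_def)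
    show "((\<lambda>l. m t * (1 - exp (-l*t))) has_real_derivative m t * (t^1 * exp (-l'*t))) (at l')" for l' t
      by (auto intro!: derivative_eq_intros simp: algebra_simps)
    show "\<bar>m t * (t^1 * exp (-l'*t))\<bar> \<le> m t * (t^1 * exp (-(l-\<eta>)*t))"
      if "l' \<in> ball l \<eta>" for l' t
    proof (cases "t > 0")
      case True
      have "l - \<eta> < l'" using ball_gt[OF l] that by (simp add: \<eta>_def)
      then have "(l-\<eta>)*t \<le> l'*t" using True by (intro mult_right_mono) auto
      then have "exp (-l'*t) \<le> exp (-(l-\<eta>)*t)" by (simp add: algebra_simps)
      then have "m t * (t^1 * exp (-l'*t)) \<le> m t * (t^1 * exp (-(l-\<eta>)*t))"
        using True m_nonneg[of t] by (intro mult_left_mono) auto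
      moreover have "0 \<le> m t * (t^1 * exp (-l'*t))" using True m_nonneg[of t] by simp
      ultimately show ?thesis by simp
    qed (simp add: m_zero)
  qed
  then show ?thesis unfolding K_def G_def[abs_def] by simp
qed

lemma K_mono:
  assumes H: "H \<rho>" and k: "1 \<le> k" and l: "-\<rho> < l" and ll: "l \<le> l'"
  shows "K k l' \<le> K k l"
  unfolding K_def
proof (rule integral_mono)
  show "integrable lborel (\<lambda>t. m t * (t^k * exp (-l'*t)))" using intk[OF H k] l ll by simp
  show "integrable lborel (\<lambda>t. m t * (t^k * exp (-l*t)))" using intk[OF H k] l by simp
  fix t :: real
  show "m t * (t^k * exp (-l'*t)) \<le> m t * (t^k * exp (-l*t))"
  proof (cases "t > 0")
    case True
    then have "exp (-l'*t) \<le> exp (-l*t)" using ll by (simp add: mult_right_mono)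
    then show ?thesis using True m_nonneg[of t] by (intro mult_left_mono) auto
  qed (simp add: m_zero)
qed

lemma K_nonneg: "0 \<le> K k l"
  unfolding K_def
proof (rule integral_nonneg_AE, rule AE_I2)
  fix t show "0 \<le> m t * (t^k * exp (-l*t))"
    by (cases "t > 0") (auto simp: m_zero m_nonneg)
qed

end

locale LD2 = LD +
  fixes \<phi> :: "real \<Rightarrow> real" and a b :: real
  assumes a: "0 \<le> a" and b: "0 \<le> b"
  and rep: "\<And>l. 0 < l \<Longrightarrow> \<phi> l = a + b*l + (LINT t:{0<..}|lborel. (1 - exp (- l * t)) * \<mu> t)"
begin

definition F where "F l = a + b*l + G l"

lemma phi_F: "0 < l \<Longrightarrow> \<phi> l = F l"
proof -
  assume l: "0 < l"
  have "(LINT t:{0<..}|lborel. (1 - exp (- l * t)) * \<mu> t) = G l"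
    unfolding set_lebesgue_integral_def G_def m_def
    by (rule Bochner_Integration.integral_cong) (auto simp: indicator_def)
  then show ?thesis using rep[OF l] by (simp add: F_def)
qed

definition P where "P n l = (if n = 0 then F l else if n = 1 then b + K 1 l else (-1)^(n-1) * K n l)"

lemma P_deriv:
  assumes H: "H \<rho>" and l: "-\<rho> < l"
  shows "(P n has_real_derivative P (Suc n) l) (at l)"
proof -
  consider "n = 0" | "n = 1" | "n \<ge> 2" by linarith
  then show ?thesis
  proof cases
    case 1
    have "((\<lambda>l. a + b*l + G l) has_real_derivative b + K 1 l) (at l)"
      by (auto intro!: derivative_eq_intros G_deriv[OF H l])
    then show ?thesis using 1 by (simp add: P_def[abs_def] F_def[abs_def])
  next
    case 2
    have "((\<lambda>l. b + K 1 l) has_real_derivative 0 + - K (Suc 1) l) (at l)"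
      by (intro derivative_intros K_deriv[OF H _ l]) auto
    then show ?thesis using 2 by (simp add: P_def[abs_def])
  next
    case 3
    have "((\<lambda>l. (-1)^(n-1) * K n l) has_real_derivative (-1)^(n-1) * - K (Suc n) l) (at l)"
      by (rule DERIV_cmult, rule K_deriv[OF H _ l]) (use 3 in auto)
    moreover have "(-1::real)^(n-1) * - K (Suc n) l = (-1)^n * K (Suc n) l"
      using 3 by (cases n) auto
    moreover have "P n = (\<lambda>l. (-1)^(n-1) * K n l)" using 3 by (auto simp: P_def[abs_def])
    ultimately show ?thesis using 3 by (simp add: P_def)
  qed
qed

lemma deriv_phi: "0 < l \<Longrightarrow> (deriv ^^ n) \<phi> l = P n l"
proof (induction n arbitrary: l)
  case 0
  then show ?case by (simp add: phi_F P_def)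
next
  case (Suc n)
  have "(P n has_real_derivative P (Suc n) l) (at l)" using P_deriv[OF H0] Suc.prems by simp
  then have "((deriv ^^ n) \<phi> has_real_derivative P (Suc n) l) (at l)"
    by (rule has_field_derivative_transform_within_open[where S="{0<..}"])
       (use Suc in auto)
  then show ?case by (simp add: DERIV_imp_deriv)
qed

end
context LD2 begin

lemma deriv_at_0_P:
  assumes H: "H \<rho>" and r: "0 < \<rho>"
  shows "deriv_at_0 \<phi> n = P n 0"
proof -
  have "(P n has_real_derivative P (Suc n) 0) (at 0)" using P_deriv[OF H] r by simp
  then have "isCont (P n) 0" by (rule DERIV_isCont)
  then have "(P n \<longlongrightarrow> P n 0) (at_right 0)"
    unfolding isCont_def by (rule tendsto_mono[OF at_le, rotated]) simp
  moreover have "eventually (\<lambda>l. P n l = (deriv ^^ n) \<phi> l) (at_right 0)"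
    using eventually_at_right_less[of 0] by eventually_elim (simp add: deriv_phi)
  ultimately have "((deriv ^^ n) \<phi> \<longlongrightarrow> P n 0) (at_right 0)" by (rule Lim_transform_eventually)
  then show ?thesis unfolding deriv_at_0_def by (intro tendsto_Lim) auto
qed

lemma P_lower: "0 < l \<Longrightarrow> K (Suc n) l \<le> (-1)^n * P (Suc n) l"
  using b by (auto simp: P_def)

lemma omega_H:
  assumes fin: "\<And>n. (((deriv ^^ Suc n) \<phi>) \<longlongrightarrow> L n) (at_right 0)"
    and s: "summable (\<lambda>n. L n / fact n * s ^ n)" and s0: "s < -r" and r: "0 \<le> r"
  shows "integrable lborel (\<lambda>t. m t * (t * exp (r*t)))"
proof -
  define q where "q = -s"
  define l0 where "l0 = q - r"
  have l0: "0 < l0" using s0 by (simp add: l0_def q_def)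
  have q: "0 \<le> q" using s0 r by (simp add: q_def)
  have Lb: "K (Suc n) l0 \<le> (-1)^n * L n" for n
  proof (rule tendsto_lowerbound)
    show "((\<lambda>l. (-1)^n * (deriv ^^ Suc n) \<phi> l) \<longlongrightarrow> (-1)^n * L n) (at_right 0)"
      by (intro tendsto_intros fin)
    have "eventually (\<lambda>l. l < l0) (at_right 0)" using l0
      by (auto simp: eventually_at_right_field intro!: exI[of _ l0])
    then show "eventually (\<lambda>l. K (Suc n) l0 \<le> (-1)^n * (deriv ^^ Suc n) \<phi> l) (at_right 0)"
      using eventually_at_right_less[of 0]
    proof eventually_elim
      case (elim l)
      have "K (Suc n) l0 \<le> K (Suc n) l" using K_mono[OF H0, of "Suc n" l l0] elim by simp
      also have "\<dots> \<le> (-1)^n * P (Suc n) l" using P_lower elim by simp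
      finally show ?case using deriv_phi[of l "Suc n"] elim by (simp del: funpow.simps)
    qed
  qed simp
  define f where "f i t = m t * (t^(Suc i) * exp (-l0*t)) * (q^i / fact i)" for i t
  have f_nonneg: "0 \<le> f i t" for i t
    by (cases "t > 0") (auto simp: f_def m_zero m_nonneg q)
  have f_int: "integrable lborel (f i)" for i
    unfolding f_def using intk[OF H0, of "Suc i" l0] l0 by simp
  have f_intval: "integral\<^sup>L lborel (f i) = K (Suc i) l0 * (q^i / fact i)" for i
    unfolding f_def K_def by simp
  have f_sums: "(\<lambda>i. f i t) sums (m t * (t * exp (r*t)))" for t
  proof -
    have "(\<lambda>i. (q*t)^i /\<^sub>R fact i) sums exp (q*t)" by (rule exp_converges)
    then have A: "(\<lambda>i. (m t * (t * exp (-l0*t))) * ((q*t)^i /\<^sub>R fact i)) sums ((m t * (t * exp (-l0*t))) * exp (q*t))"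
      by (rule sums_mult)
    have B: "(m t * (t * exp (-l0*t))) * exp (q*t) = m t * (t * exp (r*t))"
    proof -
      have e: "exp (-l0*t) * exp (q*t) = exp (r*t)"
        unfolding exp_add[symmetric] by (simp add: l0_def algebra_simps)
      have "(m t * (t * exp (-l0*t))) * exp (q*t) = m t * (t * (exp (-l0*t) * exp (q*t)))"
        by (simp only: mult_ac)
      then show ?thesis using e by simp
    qed
    have C: "(m t * (t * exp (-l0*t))) * ((q*t)^i /\<^sub>R fact i) = f i t" for i
      by (simp add: f_def power_mult_distrib field_simps)
    from A show ?thesis unfolding B C .
  qed
  have "summable (\<lambda>i. integral\<^sup>L lborel (\<lambda>t. norm (f i t)))"
  proof (rule summable_comparison_test[OF _ s])
    show "\<exists>N. \<forall>n\<ge>N. norm (integral\<^sup>L lborel (\<lambda>t. norm (f n t))) \<le> L n / fact n * s ^ n"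
    proof (intro exI allI impI)
      fix n :: nat
      have e1: "integral\<^sup>L lborel (\<lambda>t. norm (f n t)) = K (Suc n) l0 * (q^n / fact n)"
        using f_nonneg f_intval by simp
      have X0: "0 \<le> K (Suc n) l0 * (q^n / fact n)" using K_nonneg q by simp
      have XY: "K (Suc n) l0 * (q^n / fact n) \<le> ((-1)^n * L n) * (q^n / fact n)"
        using Lb q by (intro mult_right_mono) auto
      have YZ: "((-1)^n * L n) * (q^n / fact n) = L n / fact n * s ^ n"
        by (simp add: q_def power_minus')
      show "norm (integral\<^sup>L lborel (\<lambda>t. norm (f n t))) \<le> L n / fact n * s ^ n"
      proof -
        have "norm (integral\<^sup>L lborel (\<lambda>t. norm (f n t))) = K (Suc n) l0 * (q^n / fact n)"
          by (subst e1) (use K_nonneg q in simp)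
        then show ?thesis using XY YZ by linarith
      qed
    qed
  qed
  then have "integrable lborel (\<lambda>t. \<Sum>i. f i t)"
    by (intro integrable_suminf f_int AE_I2) (use f_sums f_nonneg in \<open>auto simp: sums_iff\<close>)
  moreover have "(\<lambda>t. \<Sum>i. f i t) = (\<lambda>t. m t * (t * exp (r*t)))"
    using f_sums by (auto simp: sums_iff)
  ultimately show ?thesis by simp
qed

end
context LD2 begin

lemma G0: "G 0 = 0" by (simp add: G_def)

lemma series_F:
  assumes H: "H \<beta>" and bpos: "0 < \<beta>" and y: "-\<beta> < y" "y \<le> 0"
  shows "(\<lambda>n. P n 0 / fact n * y^n) sums F y"
proof -
  define h where "h i t = - (m t * ((-y*t)^(Suc i) / fact (Suc i)))" for i t
  have h_eq: "h i = (\<lambda>t. (-((-y)^(Suc i)/fact(Suc i))) * (m t * (t^(Suc i) * exp (-0*t))))" for i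
    unfolding h_def fun_eq_iff power_mult_distrib by simp
  have K0int: "integrable lborel (\<lambda>t. m t * (t^(Suc i) * exp (-0*t)))" for i
    by (rule intk[OF H]) (use bpos in auto)
  have h_int: "integrable lborel (h i)" for i
    unfolding h_eq using K0int[of i] by simp
  have h_val: "integral\<^sup>L lborel (h i) = -((-y)^(Suc i)/fact(Suc i)) * K (Suc i) 0" for i
    unfolding h_eq K_def by simp
  have h_nonpos: "h i t \<le> 0" for i t
  proof (cases "t > 0")
    case True
    then have "0 \<le> -y*t" using y by (simp add: mult_nonpos_nonneg)
    then have "0 \<le> (-y*t)^(Suc i) / fact (Suc i)" by (intro divide_nonneg_pos zero_le_power) auto
    then have "0 \<le> m t * ((-y*t)^(Suc i) / fact (Suc i))" using m_nonneg[of t] by (rule mult_nonneg_nonneg[rotated])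
    then show ?thesis unfolding h_def by linarith
  qed (simp add: h_def m_zero)
  have h_sums: "(\<lambda>i. h i t) sums (m t * (1 - exp (-y*t)))" for t
  proof -
    have "(\<lambda>n. (-y*t)^n /\<^sub>R fact n) sums exp (-y*t)" by (rule exp_converges)
    then have "(\<lambda>n. (-y*t)^(Suc n) /\<^sub>R fact (Suc n)) sums (exp (-y*t) - 1)"
      by (subst sums_Suc_iff) simp
    then have "(\<lambda>n. (- m t) * ((-y*t)^(Suc n) /\<^sub>R fact (Suc n))) sums ((- m t) * (exp (-y*t) - 1))"
      by (rule sums_mult)
    moreover have "(- m t) * ((-y*t)^(Suc n) /\<^sub>R fact (Suc n)) = h n t" for n
      by (simp add: h_def divide_inverse mult_ac)
    moreover have "(- m t) * (exp (-y*t) - 1) = m t * (1 - exp (-y*t))" by (simp add: algebra_simps)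
    ultimately show ?thesis by simp
  qed
  have h_norm: "norm (h i t) = - h i t" for i t using h_nonpos[of i t] by simp
  have Gint: "integrable lborel (\<lambda>t. m t * (1 - exp (-y*t)))" by (rule intG[OF H y(1)])
  have sumn: "summable (\<lambda>i. integral\<^sup>L lborel (\<lambda>t. norm (h i t)))"
  proof (rule bounded_imp_summable)
    show "0 \<le> integral\<^sup>L lborel (\<lambda>t. norm (h i t))" for i by simp
    show "(\<Sum>k\<le>n. integral\<^sup>L lborel (\<lambda>t. norm (h k t))) \<le> integral\<^sup>L lborel (\<lambda>t. - (m t * (1 - exp (-y*t))))" for n
    proof -
      have "(\<Sum>k\<le>n. integral\<^sup>L lborel (\<lambda>t. norm (h k t))) = integral\<^sup>L lborel (\<lambda>t. \<Sum>k\<le>n. norm (h k t))"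
        using Bochner_Integration.integral_sum[of "{..n}" lborel "\<lambda>k t. norm (h k t)"] h_int by auto
      also have "\<dots> \<le> integral\<^sup>L lborel (\<lambda>t. - (m t * (1 - exp (-y*t))))"
      proof (rule integral_mono)
        show "integrable lborel (\<lambda>t. \<Sum>k\<le>n. norm (h k t))" using h_int by auto
        show "integrable lborel (\<lambda>t. - (m t * (1 - exp (-y*t))))" using Gint by simp
        fix t
        have s: "(\<lambda>k. - h k t) sums (- (m t * (1 - exp (-y*t))))" using h_sums[of t] by (rule sums_minus)
        have "(\<Sum>k\<le>n. - h k t) \<le> (\<Sum>k. - h k t)"
          by (rule sum_le_suminf) (use s h_nonpos in \<open>auto simp: sums_iff\<close>)
        moreover have "(\<Sum>k\<le>n. norm (h k t)) = (\<Sum>k\<le>n. - h k t)" by (simp only: h_norm)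
        ultimately show "(\<Sum>k\<le>n. norm (h k t)) \<le> - (m t * (1 - exp (-y*t)))"
          using s by (simp add: sums_iff)
      qed
      finally show ?thesis .
    qed
  qed
  have "(\<lambda>i. integral\<^sup>L lborel (h i)) sums (integral\<^sup>L lborel (\<lambda>t. \<Sum>i. h i t))"
    by (rule sums_integral[OF h_int _ sumn]) (use h_sums h_norm in \<open>auto simp: sums_iff intro!: summable_minus\<close>)
  moreover have "(\<lambda>t. \<Sum>i. h i t) = (\<lambda>t. m t * (1 - exp (-y*t)))"
    using h_sums by (auto simp: sums_iff fun_eq_iff)
  ultimately have hs: "(\<lambda>i. integral\<^sup>L lborel (h i)) sums G y" by (simp add: G_def)
  have "(\<lambda>i. (if i = 0 then b*y else 0) + integral\<^sup>L lborel (h i)) sums (b*y + G y)"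
    by (rule sums_add[OF _ hs]) (use sums_single[of 0 "\<lambda>_. b*y"] in simp)
  moreover have "(if i = 0 then b*y else 0) + integral\<^sup>L lborel (h i) = P (Suc i) 0 / fact (Suc i) * y^(Suc i)" for i
    unfolding h_val by (cases i) (auto simp: P_def power_minus' field_simps)
  ultimately have "(\<lambda>i. P (Suc i) 0 / fact (Suc i) * y^(Suc i)) sums (b*y + G y)" by simp
  then have "(\<lambda>n. P n 0 / fact n * y^n) sums (b*y + G y + P 0 0 / fact 0 * y^0)"
    by (subst (asm) sums_Suc_iff)
  moreover have "b*y + G y + P 0 0 / fact 0 * y^0 = F y" by (simp add: P_def F_def G0)
  ultimately show ?thesis by simp
qed

end
context LD2 begin

lemma beta_main:
  assumes beta: "ereal \<beta> = - omega0 (deriv \<phi>)"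
  shows "0 \<le> \<beta> \<and> H \<beta> \<and> (\<forall>y. -\<beta> < y \<longrightarrow> phi_ext \<phi> \<beta> y = F y)"
proof (cases "all_derivs_finite_at_0 (deriv \<phi>)")
  case False
  then have "\<beta> = 0" using beta by (simp add: omega0_def zero_ereal_def)
  then show ?thesis using H0 phi_F by (auto simp: phi_ext_def)
next
  case True
  define L where "L n = deriv_at_0 (deriv \<phi>) n" for n
  have fin: "((deriv ^^ Suc n) \<phi> \<longlongrightarrow> L n) (at_right 0)" for n
  proof -
    from True obtain L' where L': "((deriv ^^ n) (deriv \<phi>) \<longlongrightarrow> L') (at_right 0)"
      unfolding all_derivs_finite_at_0_def by blast
    then have "L n = L'" unfolding L_def deriv_at_0_def by (intro tendsto_Lim) auto
    moreover have "(deriv ^^ Suc n) \<phi> = (deriv ^^ n) (deriv \<phi>)" by (simp add: funpow_Suc_right del: funpow.simps)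
    ultimately show ?thesis using L' by simp
  qed
  define S where "S = {l. summable (\<lambda>n. L n / fact n * l^n)}"
  have om: "omega0 (deriv \<phi>) = Inf (ereal ` S)" using True by (simp add: omega0_def S_def L_def)
  have "0 \<in> S" unfolding S_def using powser_sums_zero[of "\<lambda>n. L n / fact n"] by (auto simp: sums_iff)
  then have "Inf (ereal ` S) \<le> 0" by (metis Inf_lower image_eqI zero_ereal_def)
  moreover have Inf_eq: "Inf (ereal ` S) = ereal (-\<beta>)" using beta om
    by (metis ereal_uminus_uminus uminus_ereal.simps(1))
  ultimately have b0: "0 \<le> \<beta>" by (simp add: zero_ereal_def)
  show ?thesis
  proof (cases "\<beta> = 0")
    case True
    then show ?thesis using H0 phi_F by (auto simp: phi_ext_def)
  next
    case False
    then have bpos: "0 < \<beta>" using b0 by simp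
    have Hb: "H \<beta>" unfolding H_def
    proof (intro allI impI)
      fix r :: real assume r: "r < \<beta>"
      show "integrable lborel (\<lambda>t. m t * (t * exp (r*t)))"
      proof (cases "r < 0")
        case True then show ?thesis using H0 by (auto simp: H_def)
      next
        case False
        have "Inf (ereal ` S) < ereal (-r)" using Inf_eq r by simp
        then obtain s where "s \<in> S" "ereal s < ereal (-r)" by (auto simp: Inf_less_iff)
        then show ?thesis using omega_H[OF fin, of s r] False by (auto simp: S_def)
      qed
    qed
    have "phi_ext \<phi> \<beta> y = F y" if y: "-\<beta> < y" for y
    proof (cases "y > 0")
      case True then show ?thesis by (simp add: phi_ext_def phi_F)
    next
      case False
      then have "phi_ext \<phi> \<beta> y = (\<Sum>n. deriv_at_0 \<phi> n / fact n * y^n)"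
        using bpos by (simp add: phi_ext_def)
      also have "\<dots> = (\<Sum>n. P n 0 / fact n * y^n)" by (simp add: deriv_at_0_P[OF Hb bpos])
      also have "\<dots> = F y" using series_F[OF Hb bpos y] False by (simp add: sums_iff)
      finally show ?thesis .
    qed
    then show ?thesis using b0 Hb by auto
  qed
qed

lemma deriv2:
  assumes H: "H \<beta>" and e: "\<forall>y. -\<beta> < y \<longrightarrow> phi_ext \<phi> \<beta> y = F y" and x: "-\<beta> < x"
  shows "deriv (deriv (phi_ext \<phi> \<beta>)) x = - K 2 x"
proof -
  have d1: "deriv (phi_ext \<phi> \<beta>) z = P 1 z" if z: "-\<beta> < z" for z
  proof -
    have "(P 0 has_real_derivative P 1 z) (at z)" using P_deriv[OF H z] by simp
    then have "(F has_real_derivative P 1 z) (at z)" by (simp add: P_def[abs_def])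
    then have "(phi_ext \<phi> \<beta> has_real_derivative P 1 z) (at z)"
      by (rule has_field_derivative_transform_within_open[where S="{-\<beta><..}"]) (use e z in auto)
    then show ?thesis by (rule DERIV_imp_deriv)
  qed
  have "(P 1 has_real_derivative P 2 x) (at x)" using P_deriv[OF H x, of 1] by (simp add: numeral_2_eq_2)
  then have "(deriv (phi_ext \<phi> \<beta>) has_real_derivative P 2 x) (at x)"
    by (rule has_field_derivative_transform_within_open[where S="{-\<beta><..}"]) (use d1 x in auto)
  then have "deriv (deriv (phi_ext \<phi> \<beta>)) x = P 2 x" by (rule DERIV_imp_deriv)
  then show ?thesis by (simp add: P_def)
qed

end

lemma powr_m3: assumes "0 < (t::real)" shows "t powr (-3) = 1 / t^3"
proof -
  have "t powr (-3) = inverse (t powr 3)" by (rule powr_minus)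
  also have "t powr 3 = t^3" using assms by (intro powr_numeral) simp
  finally show ?thesis by (simp add: divide_inverse)
qed

context LD2 begin

lemma LB:
  assumes H: "H \<beta>" and noninc: "\<forall>s t. 0 < s \<and> s \<le> t \<longrightarrow> exp (\<beta> * t) * \<mu> t \<le> exp (\<beta> * s) * \<mu> s"
    and t: "0 < t"
  shows "exp (\<beta>*t) * \<mu> t * t^3 / (8 * exp 1) \<le> K 2 (1/t - \<beta>)"
proof -
  define c where "c = (t/2)^2 * exp (-1) * (exp (\<beta>*t) * \<mu> t)"
  have c0: "0 \<le> c" using mu_pos[OF t] by (simp add: c_def)
  have "integrable lborel (\<lambda>s. indicator {t/2<..t} s *\<^sub>R c)"
    by (rule integrable_indicator) (use t in auto)
  then have ii: "integrable lborel (\<lambda>s. indicator {t/2<..t} s * c)" by simp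
  have X: "integral\<^sup>L lborel (\<lambda>s. indicator {t/2<..t} s * c) \<le> K 2 (1/t - \<beta>)"
    unfolding K_def
  proof (rule integral_mono[OF ii])
    show "integrable lborel (\<lambda>s. m s * (s^2 * exp (- (1/t - \<beta>)* s)))"
      by (rule intk[OF H]) (use t in auto)
    fix s :: real
    show "indicator {t/2<..t} s * c \<le> m s * (s^2 * exp (- (1/t - \<beta>)* s))"
    proof (cases "s \<in> {t/2<..t}")
      case True
      then have s: "t/2 < s" "s \<le> t" by auto
      then have s0: "0 < s" using t by simp
      have h1: "(t/2)^2 \<le> s^2" using s t by (intro power_mono) auto
      have "s/t \<le> 1" using s t by simp
      then have "-1 + \<beta>* s \<le> -(1/t - \<beta>)* s" by (simp add: algebra_simps)
      then have h2: "exp (-1) * exp (\<beta>* s) \<le> exp (- (1/t - \<beta>)* s)" by (simp add: exp_add[symmetric])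
      have h3: "exp (\<beta>*t) * \<mu> t \<le> exp (\<beta>* s) * \<mu> s" using noninc[rule_format, of s t] s0 s(2) by simp
      have h4: "(t/2)^2 * exp (-1) \<le> s^2 * exp (-1)" using h1 by simp
      have "c \<le> s^2 * exp (-1) * (exp (\<beta>* s) * \<mu> s)"
        unfolding c_def by (rule mult_mono[OF h4 h3]) (use mu_pos[OF t] in auto)
      also have "\<dots> = s^2 * (exp (-1) * exp (\<beta>* s)) * \<mu> s" by simp
      also have "\<dots> \<le> s^2 * exp (- (1/t - \<beta>)* s) * \<mu> s"
        using h2 mu_pos[OF s0] by (intro mult_right_mono mult_left_mono) auto
      finally have cc: "c \<le> s^2 * exp (- (1/t - \<beta>)* s) * \<mu> s" .
      have e1: "indicator {t/2<..t} s * c = c" using True by simp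
      have e2: "m s * (s^2 * exp (- (1/t - \<beta>)* s)) = s^2 * exp (- (1/t - \<beta>)* s) * \<mu> s"
        using s0 by (simp add: m_def)
      show ?thesis unfolding e1 e2 by (rule cc)
    next
      case False
      have "0 \<le> m s * (s^2 * exp (- (1/t - \<beta>)* s))"
        by (cases "s > 0") (auto simp: m_zero m_nonneg)
      then show ?thesis using False by simp
    qed
  qed
  have Y: "integral\<^sup>L lborel (\<lambda>s. indicator {t/2<..t} s * c) = c * (t/2)"
    using t by simp
  have Z: "c * (t/2) = exp (\<beta>*t) * \<mu> t * t^3 / (8 * exp 1)"
  proof -
    have "((t::real)/2)^2 * exp (-1) * (E::real) * (t/2) = E * t^3 / (8 * exp 1)" for E
      unfolding exp_minus by (simp add: field_simps power2_eq_square power3_eq_cube)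
    from this[of "exp (\<beta>*t) * \<mu> t"] show ?thesis unfolding c_def .
  qed
  show ?thesis using X unfolding Y Z .
qed

end
context LD2 begin

lemma erlang2:
  assumes lam: "0 < la"
  shows "integrable lborel (erlang_density 2 la)" "integral\<^sup>L lborel (erlang_density 2 la) = 1"
proof -
  have "(\<integral>\<^sup>+ s. ennreal (erlang_density 2 la s * s ^ 0) \<partial>lborel) = fact (2 + 0) / (fact 2 * la ^ 0)"
    by (rule nn_integral_erlang_ith_moment[OF lam])
  then have nn: "(\<integral>\<^sup>+ s. ennreal (erlang_density 2 la s) \<partial>lborel) = ennreal 1" by simp
  have "integrable lborel (erlang_density 2 la) \<and> integral\<^sup>L lborel (erlang_density 2 la) = 1"
    by (rule nn_integral_eq_integrable[THEN iffD1, OF _ _ _ nn]) (use lam in auto)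
  then show "integrable lborel (erlang_density 2 la)" "integral\<^sup>L lborel (erlang_density 2 la) = 1" by auto
qed

lemma UB:
  assumes H: "H \<beta>" and noninc: "\<forall>s t. 0 < s \<and> s \<le> t \<longrightarrow> exp (\<beta> * t) * \<mu> t \<le> exp (\<beta> * s) * \<mu> s"
    and lam: "0 < la" and r: "0 < r" and x: "1 \<le> x" and d: "la * r = \<delta>"
  shows "K 2 (la - \<beta>) \<le> exp ((x-1)*\<delta>) * K 2 (x*la - \<beta>) + exp (\<beta>*r) * \<mu> r * 2 / la^3"
proof -
  define C where "C = exp (\<beta>*r) * \<mu> r * 2 / la^3"
  have C0: "0 \<le> C" using mu_pos[OF r] lam by (simp add: C_def)
  define w where "w s = exp ((x-1)*\<delta>) * (m s * (s^2 * exp (- (x*la - \<beta>) * s))) + C * erlang_density 2 la s" for s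
  have i1: "integrable lborel (\<lambda>s. m s * (s^2 * exp (- (x*la - \<beta>) * s)))"
    by (rule intk[OF H]) (use lam x in \<open>auto intro: mult_pos_pos\<close>)
  have "K 2 (la - \<beta>) \<le> integral\<^sup>L lborel w"
    unfolding K_def
  proof (rule integral_mono)
    show "integrable lborel (\<lambda>s. m s * (s^2 * exp (- (la - \<beta>) * s)))"
      by (rule intk[OF H]) (use lam in auto)
    show "integrable lborel w" unfolding w_def using i1 erlang2(1)[OF lam] by simp
    fix s :: real
    have w1: "0 \<le> exp ((x-1)*\<delta>) * (m s * (s^2 * exp (- (x*la - \<beta>) * s)))"
      using m_nonneg[of s] by simp
    have w2: "0 \<le> C * erlang_density 2 la s" using C0 lam by simp
    show "m s * (s^2 * exp (- (la - \<beta>) * s)) \<le> w s"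
    proof (cases "s > 0")
      case False
      then show ?thesis using w1 w2 by (simp add: m_zero w_def)
    next
      case s0: True
      show ?thesis
      proof (cases "s \<le> r")
        case True
        have "(x-1)*(la* s) \<le> (x-1)*(la*r)" using x lam True by (intro mult_left_mono) auto
        then have "- (la - \<beta>) * s \<le> (x-1)*\<delta> + - (x*la - \<beta>) * s" using d by (simp add: algebra_simps)
        then have "exp (- (la - \<beta>) * s) \<le> exp ((x-1)*\<delta>) * exp (- (x*la - \<beta>) * s)"
          by (simp add: exp_add[symmetric])
        then have "m s * (s^2 * exp (- (la - \<beta>) * s)) \<le> m s * (s^2 * (exp ((x-1)*\<delta>) * exp (- (x*la - \<beta>) * s)))"
          using m_nonneg[of s] by (intro mult_left_mono) auto
        also have "\<dots> = exp ((x-1)*\<delta>) * (m s * (s^2 * exp (- (x*la - \<beta>) * s)))" by (simp only: mult_ac)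
        finally show ?thesis using w2 unfolding w_def by linarith
      next
        case False
        have g: "exp (\<beta>* s) * \<mu> s \<le> exp (\<beta>*r) * \<mu> r" using noninc[rule_format, of r s] r False by simp
        have "m s * (s^2 * exp (- (la - \<beta>) * s)) = (s^2 * exp (- la * s)) * (exp (\<beta>* s) * \<mu> s)"
        proof -
          have "exp (- (la - \<beta>) * s) = exp (\<beta>* s) * exp (- la * s)"
            unfolding exp_add[symmetric] by (simp add: algebra_simps)
          then show ?thesis using s0 by (simp add: m_def)
        qed
        also have "\<dots> \<le> (s^2 * exp (- la * s)) * (exp (\<beta>*r) * \<mu> r)"
          using g by (intro mult_left_mono) auto
        also have "\<dots> = C * erlang_density 2 la s"
          using s0 lam by (simp add: C_def erlang_density_def power3_eq_cube power2_eq_square field_simps)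
        finally show ?thesis using w1 unfolding w_def by linarith
      qed
    qed
  qed
  also have "integral\<^sup>L lborel w = exp ((x-1)*\<delta>) * K 2 (x*la - \<beta>) + C"
    unfolding w_def K_def using i1 erlang2[OF lam] by simp
  finally show ?thesis by (simp add: C_def)
qed

lemma part_i:
  assumes H: "H \<beta>" and ext: "\<forall>y. -\<beta> < y \<longrightarrow> phi_ext \<phi> \<beta> y = F y"
    and noninc: "\<forall>s t. 0 < s \<and> s \<le> t \<longrightarrow> exp (\<beta> * t) * \<mu> t \<le> exp (\<beta> * s) * \<mu> s"
  shows "\<exists>c1>0. \<forall>t>0.
            \<mu> t \<le> - c1 * t powr (-3) * deriv (deriv (phi_ext \<phi> \<beta>)) (1 / t - \<beta>) * exp (- \<beta> * t)"
proof (intro exI[of _ "8 * exp 1"] conjI allI impI)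
  show "(0::real) < 8 * exp 1" by simp
  fix t :: real assume t: "0 < t"
  have D: "deriv (deriv (phi_ext \<phi> \<beta>)) (1 / t - \<beta>) = - K 2 (1/t - \<beta>)"
    by (rule deriv2[OF H ext]) (use t in simp)
  have lb: "exp (\<beta>*t) * \<mu> t * t^3 / (8 * exp 1) \<le> K 2 (1/t - \<beta>)" by (rule LB[OF H noninc t])
  define A where "A = 8 * exp 1 / t^3 * exp (- \<beta> * t)"
  have A0: "0 \<le> A" using t by (simp add: A_def)
  have "\<mu> t = (exp (\<beta>*t) * \<mu> t * t^3 / (8 * exp 1)) * A"
    using t by (simp add: A_def exp_minus field_simps)
  also have "\<dots> \<le> K 2 (1/t - \<beta>) * A" using lb A0 by (rule mult_right_mono)
  also have "\<dots> = - (8 * exp 1) * t powr (-3) * deriv (deriv (phi_ext \<phi> \<beta>)) (1 / t - \<beta>) * exp (- \<beta> * t)"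
    unfolding D A_def powr_m3[OF t] by (simp add: field_simps)
  finally show "\<mu> t \<le> - (8 * exp 1) * t powr (-3) * deriv (deriv (phi_ext \<phi> \<beta>)) (1 / t - \<beta>) * exp (- \<beta> * t)" .
qed

lemma part_ii:
  assumes H: "H \<beta>" and ext: "\<forall>y. -\<beta> < y \<longrightarrow> phi_ext \<phi> \<beta> y = F y"
    and noninc: "\<forall>s t. 0 < s \<and> s \<le> t \<longrightarrow> exp (\<beta> * t) * \<mu> t \<le> exp (\<beta> * s) * \<mu> s"
  shows "\<forall>\<theta> \<Lambda>1 (\<Lambda>2::ereal) \<gamma>.
            \<theta> > 0 \<and> 0 \<le> \<Lambda>1 \<and> ereal \<Lambda>1 < \<Lambda>2 \<and> \<gamma> > 0 \<and>
            (\<forall>x\<ge>1. \<forall>l. \<Lambda>1 < l \<and> ereal l < \<Lambda>2 \<longrightarrow>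
               deriv (deriv (phi_ext \<phi> \<beta>)) (l * x - \<beta>) / deriv (deriv (phi_ext \<phi> \<beta>)) (l - \<beta>)
                 \<le> \<theta> * x powr (- \<gamma>))
          \<longrightarrow> (\<exists>c2>0. \<exists>\<delta>. 0 < \<delta> \<and> \<delta> < 1 \<and>
                (\<forall>t. 0 < t \<and> ereal \<delta> < ereal t * \<Lambda>2 \<and> t * \<Lambda>1 < \<delta> \<longrightarrow>
                   \<mu> t \<ge> - c2 * t powr (-3) * deriv (deriv (phi_ext \<phi> \<beta>)) (1 / t - \<beta>) * exp (- \<beta> * t)))"
proof (intro allI impI, elim conjE)
  fix \<theta> \<Lambda>1 \<gamma> :: real and \<Lambda>2 :: ereal
  assume th0: "\<theta> > 0" and L10: "0 \<le> \<Lambda>1" and L12: "ereal \<Lambda>1 < \<Lambda>2" and g0: "\<gamma> > 0"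
    and hyp: "\<forall>x\<ge>1. \<forall>l. \<Lambda>1 < l \<and> ereal l < \<Lambda>2 \<longrightarrow>
               deriv (deriv (phi_ext \<phi> \<beta>)) (l * x - \<beta>) / deriv (deriv (phi_ext \<phi> \<beta>)) (l - \<beta>)
                 \<le> \<theta> * x powr (- \<gamma>)"
  define x0 where "x0 = max 1 ((4*\<theta>) powr (1/\<gamma>))"
  define \<delta> where "\<delta> = min (1/2) (ln 2 / x0)"
  have x0: "1 \<le> x0" by (simp add: x0_def)
  have x0p: "0 < x0" using x0 by simp
  have "4*\<theta> = ((4*\<theta>) powr (1/\<gamma>)) powr \<gamma>"
    using th0 g0 by (simp add: powr_powr)
  also have "\<dots> \<le> x0 powr \<gamma>"
    by (rule powr_mono2) (use g0 in \<open>auto simp: x0_def\<close>)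
  finally have x0g: "4*\<theta> \<le> x0 powr \<gamma>" .
  have xpos: "0 < x0 powr \<gamma>" using x0p by simp
  have th: "\<theta> * x0 powr (-\<gamma>) \<le> 1/4"
  proof -
    have "\<theta> * x0 powr (-\<gamma>) = \<theta> / x0 powr \<gamma>" by (simp add: powr_minus divide_inverse)
    also have "\<dots> \<le> 1/4" using x0g xpos by (simp add: divide_le_eq)
    finally show ?thesis .
  qed
  have dpos: "0 < \<delta>" using x0p by (simp add: \<delta>_def)
  have d1: "\<delta> < 1" by (simp add: \<delta>_def)
  have ed: "exp ((x0-1)*\<delta>) \<le> 2"
  proof -
    have "\<delta> \<le> ln 2 / x0" by (simp add: \<delta>_def)
    then have "x0 * \<delta> \<le> ln 2" using x0p by (simp add: le_divide_eq mult.commute)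
    moreover have "(x0-1)*\<delta> \<le> x0 * \<delta>" using dpos by (simp add: algebra_simps)
    ultimately have "(x0-1)*\<delta> \<le> ln 2" by linarith
    then have "exp ((x0-1)*\<delta>) \<le> exp (ln 2)" by (simp only: exp_le_cancel_iff)
    then show ?thesis by simp
  qed
  have c2: "0 < \<delta>^3/4" using dpos by simp
  show "\<exists>c2>0. \<exists>\<delta>. 0 < \<delta> \<and> \<delta> < 1 \<and>
                (\<forall>t. 0 < t \<and> ereal \<delta> < ereal t * \<Lambda>2 \<and> t * \<Lambda>1 < \<delta> \<longrightarrow>
                   \<mu> t \<ge> - c2 * t powr (-3) * deriv (deriv (phi_ext \<phi> \<beta>)) (1 / t - \<beta>) * exp (- \<beta> * t))"
  proof (intro exI[of _ "\<delta>^3/4"] exI[of _ \<delta>] conjI allI impI dpos d1 c2, elim conjE)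
    fix t :: real
    assume t: "0 < t" and tL2: "ereal \<delta> < ereal t * \<Lambda>2" and tL1: "t * \<Lambda>1 < \<delta>"
    define la where "la = \<delta> / t"
    have la: "0 < la" using dpos t by (simp add: la_def)
    have lat: "la * t = \<delta>" using t by (simp add: la_def)
    have L1: "\<Lambda>1 < la" using tL1 t by (simp add: la_def pos_less_divide_eq mult.commute)
    have L2: "ereal la < \<Lambda>2"
    proof (cases \<Lambda>2)
      case (real v)
      then have "\<delta> < t * v" using tL2 by simp
      then show ?thesis using real t by (simp add: la_def pos_divide_less_eq mult.commute)
    next
      case PInf then show ?thesis by simp
    next
      case MInf then show ?thesis using tL2 t by simp
    qed
    have Dx: "deriv (deriv (phi_ext \<phi> \<beta>)) (la * x0 - \<beta>) = - K 2 (la * x0 - \<beta>)"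
      by (rule deriv2[OF H ext]) (use la x0p in simp)
    have Dl: "deriv (deriv (phi_ext \<phi> \<beta>)) (la - \<beta>) = - K 2 (la - \<beta>)"
      by (rule deriv2[OF H ext]) (use la in simp)
    have Dt: "deriv (deriv (phi_ext \<phi> \<beta>)) (1/t - \<beta>) = - K 2 (1/t - \<beta>)"
      by (rule deriv2[OF H ext]) (use t in simp)
    have Kpos: "0 < K 2 (la - \<beta>)"
    proof -
      have "exp (\<beta>*(1/la)) * \<mu> (1/la) * (1/la)^3 / (8 * exp 1) \<le> K 2 (1/(1/la) - \<beta>)"
        by (rule LB[OF H noninc]) (use la in simp)
      moreover have "0 < exp (\<beta>*(1/la)) * \<mu> (1/la) * (1/la)^3 / (8 * exp 1)"
        using la mu_pos[of "1/la"] by simp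
      ultimately show ?thesis by simp
    qed
    have "deriv (deriv (phi_ext \<phi> \<beta>)) (la * x0 - \<beta>) / deriv (deriv (phi_ext \<phi> \<beta>)) (la - \<beta>)
                 \<le> \<theta> * x0 powr (- \<gamma>)"
      using hyp L1 L2 x0 by blast
    moreover have "(- K 2 (la * x0 - \<beta>)) / (- K 2 (la - \<beta>)) = K 2 (la * x0 - \<beta>) / K 2 (la - \<beta>)" by simp
    ultimately have "K 2 (la * x0 - \<beta>) / K 2 (la - \<beta>) \<le> 1/4" unfolding Dx Dl using th by linarith
    then have Kx: "K 2 (la * x0 - \<beta>) \<le> K 2 (la - \<beta>) / 4" using Kpos by (simp add: divide_le_eq)
    have ub: "K 2 (la - \<beta>) \<le> exp ((x0-1)*\<delta>) * K 2 (x0*la - \<beta>) + exp (\<beta>*t) * \<mu> t * 2 / la^3"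
      by (rule UB[OF H noninc la t x0 lat])
    have "exp ((x0-1)*\<delta>) * K 2 (x0*la - \<beta>) \<le> 2 * (K 2 (la - \<beta>) / 4)"
      using Kx ed K_nonneg[of 2 "x0*la - \<beta>"] by (intro mult_mono) (auto simp: mult.commute)
    then have e: "exp ((x0-1)*\<delta>) * K 2 (x0*la - \<beta>) \<le> K 2 (la - \<beta>) / 2" by simp
    have "K 2 (la - \<beta>) \<le> 2 * (exp (\<beta>*t) * \<mu> t * 2 / la^3)" using ub e by linarith
    moreover have "2 * (exp (\<beta>*t) * \<mu> t * 2 / la^3) = 4 * (exp (\<beta>*t) * \<mu> t) / la^3" by simp
    ultimately have K4: "K 2 (la - \<beta>) \<le> 4 * (exp (\<beta>*t) * \<mu> t) / la^3" by simp
    have "K 2 (1/t - \<beta>) \<le> K 2 (la - \<beta>)"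
    proof (rule K_mono[OF H])
      show "-\<beta> < la - \<beta>" using la by simp
      show "la - \<beta> \<le> 1/t - \<beta>" using d1 t by (simp add: la_def divide_right_mono)
    qed simp
    with K4 have Kt: "K 2 (1/t - \<beta>) \<le> 4 * (exp (\<beta>*t) * \<mu> t) / la^3" by linarith
    define A where "A = \<delta>^3/4 / t^3 * exp (- \<beta> * t)"
    have A0: "0 \<le> A" using dpos t by (simp add: A_def)
    have "- (\<delta>^3/4) * t powr (-3) * deriv (deriv (phi_ext \<phi> \<beta>)) (1 / t - \<beta>) * exp (- \<beta> * t)
        = K 2 (1/t - \<beta>) * A"
      unfolding Dt A_def powr_m3[OF t] by (simp add: field_simps)
    also have "\<dots> \<le> (4 * (exp (\<beta>*t) * \<mu> t) / la^3) * A" using Kt A0 by (rule mult_right_mono)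
    also have "\<dots> = \<mu> t"
      using t dpos unfolding A_def la_def by (simp add: field_simps exp_minus power_divide)
    finally show "\<mu> t \<ge> - (\<delta>^3/4) * t powr (-3) * deriv (deriv (phi_ext \<phi> \<beta>)) (1 / t - \<beta>) * exp (- \<beta> * t)" .
  qed
qed

end

theorem corollary4p1:
  fixes \<phi> \<mu> :: "real \<Rightarrow> real" and \<beta> :: real
  assumes bf: "bernstein_function \<phi>"
    and beta: "ereal \<beta> = - omega0 (deriv \<phi>)"
    and dens: "levy_density \<phi> \<mu>"
    and pos: "\<forall>t>0. \<mu> t > 0"
    and noninc: "\<forall>s t. 0 < s \<and> s \<le> t \<longrightarrow> exp (\<beta> * t) * \<mu> t \<le> exp (\<beta> * s) * \<mu> s"
  shows "(\<exists>c1>0. \<forall>t>0.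
            \<mu> t \<le> - c1 * t powr (-3) * deriv (deriv (phi_ext \<phi> \<beta>)) (1 / t - \<beta>) * exp (- \<beta> * t))
       \<and> (\<forall>\<theta> \<Lambda>1 (\<Lambda>2::ereal) \<gamma>.
            \<theta> > 0 \<and> 0 \<le> \<Lambda>1 \<and> ereal \<Lambda>1 < \<Lambda>2 \<and> \<gamma> > 0 \<and>
            (\<forall>x\<ge>1. \<forall>l. \<Lambda>1 < l \<and> ereal l < \<Lambda>2 \<longrightarrow>
               deriv (deriv (phi_ext \<phi> \<beta>)) (l * x - \<beta>) / deriv (deriv (phi_ext \<phi> \<beta>)) (l - \<beta>)
                 \<le> \<theta> * x powr (- \<gamma>))
          \<longrightarrow> (\<exists>c2>0. \<exists>\<delta>. 0 < \<delta> \<and> \<delta> < 1 \<and>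
                (\<forall>t. 0 < t \<and> ereal \<delta> < ereal t * \<Lambda>2 \<and> t * \<Lambda>1 < \<delta> \<longrightarrow>
                   \<mu> t \<ge> - c2 * t powr (-3) * deriv (deriv (phi_ext \<phi> \<beta>)) (1 / t - \<beta>) * exp (- \<beta> * t))))"
proof -
  from dens obtain a b where mint: "set_integrable lborel {0<..} (\<lambda>t. min 1 t * \<mu> t)"
    and a: "0 \<le> a" and b: "0 \<le> b"
    and rep: "\<forall>l>0. \<phi> l = a + b * l + (LINT t:{0<..}|lborel. (1 - exp (- l * t)) * \<mu> t)"
    unfolding levy_density_def by blast
  interpret LD2 \<mu> \<phi> a b
    by unfold_locales (use pos mint a b rep in auto)
  from beta_main[OF beta] have Hb: "H \<beta>" and ext: "\<forall>y. -\<beta> < y \<longrightarrow> phi_ext \<phi> \<beta> y = F y"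
    by auto
  show ?thesis using part_i[OF Hb ext noninc] part_ii[OF Hb ext noninc] by blast
qed

end
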